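(* Let $G$ be a finite graph with maximum degree $\Delta$ and let $\mathcal{V}=\{V_1,\ldots,V_n\}$ be a partition of $V(G)$ with $|V_i|\ge2\Delta+1$ for all $i$. Then $\mathbf{RG}(\mathcal{I}(G),\mathcal{V})$ is connected.
   Context: $\mathcal{I}(G)$ is the complex of independent sets of $G$. An independent transversal is an independent set of $G$ containing exactly one vertex from each $V_i$. $\mathbf{RG}(\mathcal{I}(G),\mathcal{V})$ is the graph on the independent transversals, two being adjacent if their union is an independent set of size $n+1$. *)

theory Defs
  imports Main "HOL-Library.Disjoint_Sets"
begin

definition simple_graph :: "'a set \<Rightarrow> ('a \<Rightarrow> 'a \<Rightarrow> bool) \<Rightarrow> bool" where
  "simple_graph VG E \<longleftrightarrow> finite VG \<and> (\<forall>u v. E u v \<longrightarrow> E v u)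
     \<and> (\<forall>v. \<not> E v v) \<and> (\<forall>u v. E u v \<longrightarrow> u \<in> VG \<and> v \<in> VG)"

definition degree :: "'a set \<Rightarrow> ('a \<Rightarrow> 'a \<Rightarrow> bool) \<Rightarrow> 'a \<Rightarrow> nat" where
  "degree VG E v = card {u \<in> VG. E v u}"

definition max_degree :: "'a set \<Rightarrow> ('a \<Rightarrow> 'a \<Rightarrow> bool) \<Rightarrow> nat" where
  "max_degree VG E = Max (insert 0 (degree VG E ` VG))"

(* independent sets of G, i.e. the faces of the complex I(G) *)
definition independent :: "'a set \<Rightarrow> ('a \<Rightarrow> 'a \<Rightarrow> bool) \<Rightarrow> 'a set \<Rightarrow> bool" where
  "independent VG E S \<longleftrightarrow> S \<subseteq> VG \<and> (\<forall>u\<in>S. \<forall>v\<in>S. \<not> E u v)"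

definition indep_transversal ::
  "'a set \<Rightarrow> ('a \<Rightarrow> 'a \<Rightarrow> bool) \<Rightarrow> 'a set set \<Rightarrow> 'a set \<Rightarrow> bool" where
  "indep_transversal VG E P T \<longleftrightarrow> independent VG E T \<and> T \<subseteq> \<Union>P
     \<and> (\<forall>X\<in>P. card (T \<inter> X) = 1)"

definition RG_adj ::
  "'a set \<Rightarrow> ('a \<Rightarrow> 'a \<Rightarrow> bool) \<Rightarrow> 'a set set \<Rightarrow> 'a set \<Rightarrow> 'a set \<Rightarrow> bool" where
  "RG_adj VG E P S T \<longleftrightarrow> indep_transversal VG E P S \<and> indep_transversal VG E P T
     \<and> independent VG E (S \<union> T) \<and> card (S \<union> T) = card P + 1"

definition RG_connected :: "'a set \<Rightarrow> ('a \<Rightarrow> 'a \<Rightarrow> bool) \<Rightarrow> 'a set set \<Rightarrow> bool" where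
  "RG_connected VG E P \<longleftrightarrow>
     (\<forall>S T. indep_transversal VG E P S \<longrightarrow> indep_transversal VG E P T
        \<longrightarrow> (RG_adj VG E P)\<^sup>*\<^sup>* S T)"

end

theory Submission
  imports Defs
begin


lemma lex_lt:
  assumes "length a = length b" "j < length a" "\<forall>q<j. a!q = b!q" "a!j < b!j"
  shows "(a, b) \<in> lex less_than"
proof -
  have tk: "take j a = take j b"
    using assms by (intro nth_equalityI) auto
  have a: "a = take j a @ a!j # drop (Suc j) a" using assms(2) by (simp add: id_take_nth_drop)
  have b0: "b = take j b @ b!j # drop (Suc j) b" using assms(1,2) by (simp add: id_take_nth_drop)
  have b: "b = take j a @ b!j # drop (Suc j) b" using b0 tk by simp
  show ?thesis unfolding lex_conv using assms(1,4) a b by blast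
qed

lemma rtranclp_sym:
  assumes "r\<^sup>*\<^sup>* a b" "\<And>x y. r x y \<Longrightarrow> r y x"
  shows "r\<^sup>*\<^sup>* b a"
  using assms(1)
proof (induction rule: rtranclp_induct)
  case base then show ?case by simp
next
  case (step y z)
  have "r z y" using assms(2) step(2) by blast
  then show ?case using step.IH by (rule converse_rtranclp_into_rtranclp)
qed

locale RGctx =
  fixes VG :: "'a set" and E :: "'a \<Rightarrow> 'a \<Rightarrow> bool" and P :: "'a set set"
  assumes sg: "simple_graph VG E" and pt: "partition_on VG P"
    and sz: "\<forall>X\<in>P. card X \<ge> 2 * max_degree VG E + 1"
begin

abbreviation "Dl \<equiv> max_degree VG E"
abbreviation IT where "IT S \<equiv> indep_transversal VG E P S"
abbreviation reach where "reach \<equiv> (RG_adj VG E P)\<^sup>*\<^sup>*"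

definition cls where "cls v = (THE X. X \<in> P \<and> v \<in> X)"

lemma finV: "finite VG" using sg by (simp add: simple_graph_def)
lemma symE: "E u v \<Longrightarrow> E v u" using sg by (simp add: simple_graph_def)
lemma irrE: "\<not> E v v" using sg by (simp add: simple_graph_def)
lemma edgeV: "E u v \<Longrightarrow> u \<in> VG \<and> v \<in> VG" using sg by (simp add: simple_graph_def)
lemma UP: "\<Union>P = VG" using pt by (simp add: partition_on_def)
lemma finP: "finite P" using finite_UnionD[of P] UP finV by simp
lemma finX: "X \<in> P \<Longrightarrow> finite X" using UP finV finite_subset[of X VG] by blast
lemma uniq: "X \<in> P \<Longrightarrow> Y \<in> P \<Longrightarrow> v \<in> X \<Longrightarrow> v \<in> Y \<Longrightarrow> X = Y"
proof (rule ccontr)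
  assume a: "X \<in> P" "Y \<in> P" "v \<in> X" "v \<in> Y" "X \<noteq> Y"
  have "disjoint P" using partition_onD2[OF pt] .
  then have "X \<inter> Y = {}" using a unfolding disjoint_def by simp
  moreover have "v \<in> X \<inter> Y" using a by simp
  ultimately show False by simp
qed
lemma cls_eq: "X \<in> P \<Longrightarrow> v \<in> X \<Longrightarrow> cls v = X"
proof -
  assume a: "X \<in> P" "v \<in> X"
  show "cls v = X" unfolding cls_def
  proof (rule the_equality)
    show "X \<in> P \<and> v \<in> X" using a by simp
    fix Y assume "Y \<in> P \<and> v \<in> Y"
    then show "Y = X" using uniq[of Y X v] a by simp
  qed
qed
lemma cls_in: "v \<in> VG \<Longrightarrow> cls v \<in> P \<and> v \<in> cls v"
proof -
  assume "v \<in> VG"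
  then obtain X where "X \<in> P" "v \<in> X" using UP by blast
  then show ?thesis using cls_eq by simp
qed
lemma XV: "X \<in> P \<Longrightarrow> X \<subseteq> VG" using UP by blast

lemma deg_le: "card {v\<in>VG. E d v} \<le> Dl"
proof (cases "d \<in> VG")
  case True
  have "degree VG E d \<in> insert 0 (degree VG E ` VG)" using True by simp
  moreover have "finite (insert 0 (degree VG E ` VG))" using finV by simp
  ultimately have "degree VG E d \<le> Dl" unfolding max_degree_def by (rule Max_ge[rotated])
  then show ?thesis unfolding degree_def .
next
  case False
  then have "{v\<in>VG. E d v} = {}" using edgeV by blast
  then show ?thesis by (metis card.empty zero_le)
qed

lemma IT_sub: "IT S \<Longrightarrow> S \<subseteq> VG"
  by (simp add: indep_transversal_def independent_def)
lemma IT_fin: "IT S \<Longrightarrow> finite S" using IT_sub finV finite_subset by blast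
lemma IT_ind: "IT S \<Longrightarrow> u \<in> S \<Longrightarrow> v \<in> S \<Longrightarrow> \<not> E u v"
  by (simp add: indep_transversal_def independent_def)
lemma IT_one: "IT S \<Longrightarrow> X \<in> P \<Longrightarrow> \<exists>s. S \<inter> X = {s}"
  by (simp add: indep_transversal_def card_1_singleton_iff)
lemma IT_same: "IT S \<Longrightarrow> s \<in> S \<Longrightarrow> s' \<in> S \<Longrightarrow> cls s = cls s' \<Longrightarrow> s = s'"
proof -
  assume a: "IT S" "s \<in> S" "s' \<in> S" "cls s = cls s'"
  have "s \<in> VG" "s' \<in> VG" using a IT_sub by auto
  then have "cls s \<in> P" "s \<in> cls s" "s' \<in> cls s" using cls_in a by auto
  then obtain z where "S \<inter> cls s = {z}" using IT_one a by blast
  moreover have "s \<in> S \<inter> cls s" "s' \<in> S \<inter> cls s" using a \<open>s \<in> cls s\<close> \<open>s' \<in> cls s\<close> by auto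
  ultimately show "s = s'" by auto
qed

lemma card_IT: "IT S \<Longrightarrow> card S = card P"
proof -
  assume a: "IT S"
  have "bij_betw cls S P"
    unfolding bij_betw_def
  proof
    show "inj_on cls S" using IT_same a by (meson inj_onI)
    show "cls ` S = P"
    proof
      show "cls ` S \<subseteq> P" using a IT_sub cls_in by blast
      show "P \<subseteq> cls ` S"
      proof
        fix X assume "X \<in> P"
        then obtain s where "S \<inter> X = {s}" using IT_one a by blast
        then show "X \<in> cls ` S" using cls_eq \<open>X \<in> P\<close> by blast
      qed
    qed
  qed
  then show ?thesis by (rule bij_betw_same_card)
qed

lemma swap:
  assumes "IT S" "x \<in> VG" "x \<notin> S" "\<forall>s\<in>S. \<not> E x s"
  shows "IT (insert x (S - cls x)) \<and> RG_adj VG E P S (insert x (S - cls x))"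
proof -
  let ?S = "insert x (S - cls x)"
  have cx: "cls x \<in> P" "x \<in> cls x" using cls_in assms by auto
  have ind: "independent VG E (insert x S)"
    unfolding independent_def
  proof (intro conjI ballI)
    show "insert x S \<subseteq> VG" using assms(1,2) IT_sub by simp
    fix u v assume "u \<in> insert x S" "v \<in> insert x S"
    then show "\<not> E u v" using assms(1,4) IT_ind symE irrE by blast
  qed
  have it: "IT ?S"
    unfolding indep_transversal_def
  proof (intro conjI)
    show "independent VG E ?S" using ind unfolding independent_def by blast
    show "?S \<subseteq> \<Union>P" using assms IT_sub UP by blast
    show "\<forall>X\<in>P. card (?S \<inter> X) = 1"
    proof
      fix X assume X: "X \<in> P"
      show "card (?S \<inter> X) = 1"
      proof (cases "X = cls x")
        case True
        then have "?S \<inter> X = {x}" using cx by blast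
        then show ?thesis by simp
      next
        case False
        then have "x \<notin> X" using uniq X cx by blast
        moreover have "cls x \<inter> X = {}" using uniq X cx False by blast
        ultimately have "?S \<inter> X = S \<inter> X" by blast
        then show ?thesis using assms(1) X by (simp add: indep_transversal_def)
      qed
    qed
  qed
  have un: "S \<union> ?S = insert x S" by blast
  have "card (insert x S) = card P + 1"
    using assms IT_fin card_IT by simp
  then show ?thesis using it assms(1) ind un unfolding RG_adj_def by simp
qed

lemma adj_sym: "RG_adj VG E P S T \<Longrightarrow> RG_adj VG E P T S"
  unfolding RG_adj_def by (simp add: Un_commute)

end



context RGctx
begin

definition bl where "bl U y = {u \<in> U. E y u}"
definition Ic where "Ic S T = {X \<in> P. S \<inter> X \<noteq> T \<inter> X}"

lemma Ic_sub: "Ic S T \<subseteq> P" unfolding Ic_def by blast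

lemma Ic_ne: assumes "IT S" "IT T" "S \<noteq> T" shows "Ic S T \<noteq> {}"
proof
  assume e: "Ic S T = {}"
  have "S \<subseteq> T"
  proof
    fix s assume "s \<in> S"
    then have "cls s \<in> P" "s \<in> cls s" using cls_in IT_sub assms by auto
    then have "S \<inter> cls s = T \<inter> cls s" using e unfolding Ic_def by auto
    then show "s \<in> T" using \<open>s \<in> S\<close> \<open>s \<in> cls s\<close> by blast
  qed
  moreover have "T \<subseteq> S"
  proof
    fix s assume "s \<in> T"
    then have "cls s \<in> P" "s \<in> cls s" using cls_in IT_sub assms by auto
    then have "S \<inter> cls s = T \<inter> cls s" using e unfolding Ic_def by auto
    then show "s \<in> S" using \<open>s \<in> T\<close> \<open>s \<in> cls s\<close> by blast
  qed
  ultimately show False using assms by blast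
qed

lemma bl_le: "U \<subseteq> VG \<Longrightarrow> card (bl U y) \<le> Dl"
proof -
  assume "U \<subseteq> VG"
  then have "bl U y \<subseteq> {v\<in>VG. E y v}" unfolding bl_def by blast
  then have "card (bl U y) \<le> card {v\<in>VG. E y v}" using finV by (simp add: card_mono)
  then show ?thesis using deg_le order_trans by blast
qed

lemma bl_fin: "U \<subseteq> VG \<Longrightarrow> finite (bl U y)"
proof -
  assume "U \<subseteq> VG"
  then have "bl U y \<subseteq> VG" unfolding bl_def by blast
  then show ?thesis using finV finite_subset by blast
qed

lemma moveA1:
  assumes "IT S" "IT T" "t \<in> T" "t \<notin> S" "\<forall>s\<in>S. \<not> E t s"
  shows "\<exists>S'. IT S' \<and> RG_adj VG E P S S' \<and> card (S' - T) < card (S - T)"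
proof -
  have tV: "t \<in> VG" using assms IT_sub by auto
  have sw: "IT (insert t (S - cls t)) \<and> RG_adj VG E P S (insert t (S - cls t))"
    using swap[OF assms(1) tV assms(4,5)] .
  have cP: "cls t \<in> P" "t \<in> cls t" using cls_in tV by auto
  obtain s0 where s0: "S \<inter> cls t = {s0}" using IT_one assms(1) cP by blast
  obtain t0 where t0: "T \<inter> cls t = {t0}" using IT_one assms(2) cP by blast
  have "t \<in> T \<inter> cls t" using assms(3) cP by blast
  then have "t0 = t" using t0 by auto
  have "s0 \<in> S \<inter> cls t" using s0 by auto
  then have s0T: "s0 \<notin> T" using t0 \<open>t0 = t\<close> assms(4) by auto
  have "insert t (S - cls t) - T \<subseteq> S - T" using assms by auto
  moreover have "s0 \<in> S - T" "s0 \<notin> insert t (S - cls t) - T" using \<open>s0 \<in> S \<inter> cls t\<close> s0T assms by auto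
  ultimately have "insert t (S - cls t) - T \<subset> S - T" by blast
  then have "card (insert t (S - cls t) - T) < card (S - T)"
    using IT_fin assms(1) by (meson finite_Diff psubset_card_mono)
  then show ?thesis using sw by blast
qed

lemma moveA2:
  assumes "IT S" "IT T" "s \<in> S" "s \<notin> T" "\<forall>t\<in>T. \<not> E s t"
  shows "\<exists>T'. IT T' \<and> RG_adj VG E P T T' \<and> card (S - T') < card (S - T)"
proof -
  have sV: "s \<in> VG" using assms IT_sub by auto
  have sw: "IT (insert s (T - cls s)) \<and> RG_adj VG E P T (insert s (T - cls s))"
    using swap[OF assms(2) sV assms(4,5)] .
  have cP: "cls s \<in> P" "s \<in> cls s" using cls_in sV by auto
  obtain s0 where s0: "S \<inter> cls s = {s0}" using IT_one assms(1) cP by blast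
  have "s \<in> S \<inter> cls s" using assms(3) cP by blast
  then have "s0 = s" using s0 by auto
  have "S - insert s (T - cls s) \<subseteq> S - T"
  proof
    fix v assume v: "v \<in> S - insert s (T - cls s)"
    show "v \<in> S - T"
    proof (cases "v \<in> cls s")
      case True
      then have "v \<in> S \<inter> cls s" using v by blast
      then have "v = s" using s0 \<open>s0 = s\<close> by auto
      then show ?thesis using v by blast
    next
      case False then show ?thesis using v by blast
    qed
  qed
  moreover have "s \<in> S - T" "s \<notin> S - insert s (T - cls s)" using assms(3,4) by auto
  ultimately have "S - insert s (T - cls s) \<subset> S - T" by blast
  then have "card (S - insert s (T - cls s)) < card (S - T)"
    using IT_fin assms(1) by (meson finite_Diff psubset_card_mono)
  then show ?thesis using sw by blast
qed

lemma moveB1: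
  assumes "IT S" "IT T" "x \<in> VG" "x \<notin> S \<union> T" "\<forall>u\<in>S \<union> T. \<not> E x u" "cls x \<in> Ic S T"
  shows "\<exists>S' T'. IT S' \<and> IT T' \<and> RG_adj VG E P S S' \<and> RG_adj VG E P T T'
     \<and> card (S' - T') < card (S - T)"
proof -
  have swS: "IT (insert x (S - cls x)) \<and> RG_adj VG E P S (insert x (S - cls x))"
    using swap[OF assms(1,3)] assms(4,5) by blast
  have swT: "IT (insert x (T - cls x)) \<and> RG_adj VG E P T (insert x (T - cls x))"
    using swap[OF assms(2,3)] assms(4,5) by blast
  have cP: "cls x \<in> P" "x \<in> cls x" using cls_in assms by auto
  obtain s0 where s0: "S \<inter> cls x = {s0}" using IT_one assms(1) cP by blast
  obtain t0 where t0: "T \<inter> cls x = {t0}" using IT_one assms(2) cP by blast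
  have "s0 \<noteq> t0" using assms(6) s0 t0 unfolding Ic_def by auto
  have "s0 \<in> S \<inter> cls x" using s0 by auto
  then have s0T: "s0 \<notin> T" using t0 \<open>s0 \<noteq> t0\<close> by auto
  have "insert x (S - cls x) - insert x (T - cls x) \<subseteq> S - T" by auto
  moreover have "s0 \<in> S - T" "s0 \<notin> insert x (S - cls x) - insert x (T - cls x)"
    using \<open>s0 \<in> S \<inter> cls x\<close> s0T by auto
  ultimately have "insert x (S - cls x) - insert x (T - cls x) \<subset> S - T" by blast
  then have "card (insert x (S - cls x) - insert x (T - cls x)) < card (S - T)"
    using IT_fin assms(1) by (meson finite_Diff psubset_card_mono)
  then show ?thesis using swS swT by blast
qed

lemma moveB2:
  assumes "IT S" "IT T" "x \<in> VG" "x \<notin> S \<union> T" "\<forall>u\<in>S \<union> T. \<not> E x u" "cls x \<notin> Ic S T"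
  shows "IT (insert x (S - cls x)) \<and> IT (insert x (T - cls x))
     \<and> RG_adj VG E P S (insert x (S - cls x)) \<and> RG_adj VG E P T (insert x (T - cls x))
     \<and> insert x (S - cls x) - insert x (T - cls x) = S - T
     \<and> Ic (insert x (S - cls x)) (insert x (T - cls x)) = Ic S T
     \<and> insert x (S - cls x) \<union> insert x (T - cls x) = insert x (S \<union> T - cls x)"
proof -
  have swS: "IT (insert x (S - cls x)) \<and> RG_adj VG E P S (insert x (S - cls x))"
    using swap[OF assms(1,3)] assms(4,5) by blast
  have swT: "IT (insert x (T - cls x)) \<and> RG_adj VG E P T (insert x (T - cls x))"
    using swap[OF assms(2,3)] assms(4,5) by blast
  have cP: "cls x \<in> P" "x \<in> cls x" using cls_in assms by auto
  have eq: "S \<inter> cls x = T \<inter> cls x" using assms(6) cP unfolding Ic_def by blast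
  have d1: "insert x (S - cls x) - insert x (T - cls x) = S - T"
  proof
    show "insert x (S - cls x) - insert x (T - cls x) \<subseteq> S - T" using assms(4) by auto
    show "S - T \<subseteq> insert x (S - cls x) - insert x (T - cls x)"
    proof
      fix v assume v: "v \<in> S - T"
      have "v \<notin> cls x" using v eq by auto
      then show "v \<in> insert x (S - cls x) - insert x (T - cls x)" using v assms(4) by auto
    qed
  qed
  have d2: "Ic (insert x (S - cls x)) (insert x (T - cls x)) = Ic S T"
  proof -
    have "\<And>Y. Y \<in> P \<Longrightarrow> (insert x (S - cls x) \<inter> Y \<noteq> insert x (T - cls x) \<inter> Y) = (S \<inter> Y \<noteq> T \<inter> Y)"
    proof -
      fix Y assume Y: "Y \<in> P"
      show "(insert x (S - cls x) \<inter> Y \<noteq> insert x (T - cls x) \<inter> Y) = (S \<inter> Y \<noteq> T \<inter> Y)"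
      proof (cases "Y = cls x")
        case True then show ?thesis using eq by auto
      next
        case False
        then have "x \<notin> Y" "cls x \<inter> Y = {}" using uniq Y cP by blast+
        then have "insert x (S - cls x) \<inter> Y = S \<inter> Y" "insert x (T - cls x) \<inter> Y = T \<inter> Y" by auto
        then show ?thesis by simp
      qed
    qed
    then show ?thesis unfolding Ic_def by auto
  qed
  have d3: "insert x (S - cls x) \<union> insert x (T - cls x) = insert x (S \<union> T - cls x)" by blast
  show ?thesis using swS swT d1 d2 d3 by blast
qed

end



context RGctx
begin

definition Wc where "Wc I U ys = I \<union> (\<Union>y\<in>set ys. cls ` bl U y)"
definition Dc where "Dc I U ys = (U \<inter> \<Union>(Wc I U ys)) \<union> set ys"
definition valid where "valid I U xs \<longleftrightarrow> (\<forall>p<length xs. xs!p \<in> \<Union>(Wc I U (take p xs))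
   \<and> xs!p \<notin> U \<and> xs!p \<notin> set (take p xs) \<and> (\<forall>d\<in>Dc I U (take p xs). \<not> E (xs!p) d))"
definition pot where "pot U xs = map (\<lambda>q. if q < length xs then card (bl U (xs!q)) else Suc Dl) [0..<card P]"

lemma validD:
  assumes "valid I U xs" "p < length xs"
  shows "xs!p \<in> \<Union>(Wc I U (take p xs))" "xs!p \<notin> U" "xs!p \<notin> set (take p xs)"
    "\<And>d. d \<in> Dc I U (take p xs) \<Longrightarrow> \<not> E (xs!p) d"
  using assms unfolding valid_def by blast+

lemma Wc_sub: "I \<subseteq> P \<Longrightarrow> U \<subseteq> VG \<Longrightarrow> Wc I U ys \<subseteq> P"
  unfolding Wc_def bl_def using cls_in by blast

lemma Wc_snoc: "Wc I U (ys @ [y]) = Wc I U ys \<union> cls ` bl U y"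
  unfolding Wc_def by auto

lemma Wcard:
  assumes v: "valid I U xs" and IP: "I \<subseteq> P" and UV: "U \<subseteq> VG"
  shows "p \<le> length xs \<Longrightarrow> (\<forall>q<p. bl U (xs!q) \<noteq> {}) \<Longrightarrow> card I + p \<le> card (Wc I U (take p xs))"
proof (induction p)
  case 0 then show ?case by (simp add: Wc_def)
next
  case (Suc p)
  let ?ys = "take p xs" and ?y = "xs!p"
  have p: "p < length xs" using Suc by simp
  have tk: "take (Suc p) xs = ?ys @ [?y]" using p by (simp add: take_Suc_conv_app_nth)
  have IH: "card I + p \<le> card (Wc I U ?ys)" using Suc by simp
  obtain u where u: "u \<in> bl U ?y" using Suc by auto
  have uU: "u \<in> U" "E ?y u" using u unfolding bl_def by auto
  have vp: "\<forall>d\<in>Dc I U ?ys. \<not> E ?y d" using validD(4)[OF v p] by blast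
  have nin: "cls u \<notin> Wc I U ?ys"
  proof
    assume "cls u \<in> Wc I U ?ys"
    moreover have "u \<in> cls u" using cls_in uU UV by blast
    ultimately have "u \<in> Dc I U ?ys" unfolding Dc_def using uU by blast
    then show False using vp uU by blast
  qed
  have fin: "finite (Wc I U (take (Suc p) xs))" using Wc_sub[OF IP UV] finP finite_subset by blast
  have "insert (cls u) (Wc I U ?ys) \<subseteq> Wc I U (take (Suc p) xs)"
    using tk u Wc_snoc by auto
  then have "card (insert (cls u) (Wc I U ?ys)) \<le> card (Wc I U (take (Suc p) xs))"
    using fin card_mono by blast
  moreover have "finite (Wc I U ?ys)" using Wc_sub[OF IP UV] finP finite_subset by blast
  then have "card (insert (cls u) (Wc I U ?ys)) = Suc (card (Wc I U ?ys))"
    using nin by simp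
  ultimately show ?case using IH by simp
qed

lemma pot_len: "length (pot U xs) = card P" unfolding pot_def by simp

end



context RGctx
begin

lemma chainC:
  assumes S: "IT S" and T: "IT T" and ST: "S \<noteq> T"
    and v: "valid (Ic S T) (S \<union> T) xs"
    and blk: "\<forall>q<length xs. bl (S \<union> T) (xs!q) \<noteq> {}"
    and noA1: "\<forall>t\<in>T - S. \<exists>s\<in>S. E t s"
    and noA2: "\<forall>s\<in>S - T. \<exists>t\<in>T. E s t"
  shows "\<exists>x. valid (Ic S T) (S \<union> T) (xs @ [x])
     \<and> (pot (S \<union> T) (xs @ [x]), pot (S \<union> T) xs) \<in> lex less_than"
proof -
  define I where "I = Ic S T"
  define U where "U = S \<union> T"
  define W where "W = Wc I U xs"
  define D where "D = Dc I U xs"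
  define m where "m = length xs"
  define N where "N = {v\<in>VG. \<exists>d\<in>D. E d v}"
  have IP: "I \<subseteq> P" unfolding I_def by (rule Ic_sub)
  have UV: "U \<subseteq> VG" unfolding U_def using S T IT_sub by auto
  have WP: "W \<subseteq> P" unfolding W_def using Wc_sub IP UV by blast
  have finW: "finite W" using WP finP finite_subset by blast
  have IW: "I \<subseteq> W" unfolding W_def Wc_def by blast
  have Ine: "I \<noteq> {}" unfolding I_def using Ic_ne S T ST by blast
  have cW: "card I + m \<le> card W"
    using Wcard[OF v[folded I_def U_def] IP UV, of m] blk unfolding m_def W_def I_def U_def by simp
  have WPc: "card W \<le> card P" using WP finP card_mono by blast
  have cI1: "1 \<le> card I" using Ine IP finP finite_subset by (metis One_nat_def Suc_leI card_gt_0_iff)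
  have mP: "m < card P" using cW WPc cI1 by linarith
  have c1: "card (S \<inter> \<Union>W) \<le> card W"
  proof (rule card_inj_on_le)
    show "inj_on cls (S \<inter> \<Union>W)" using IT_same S by (meson IntD1 inj_onI)
    show "cls ` (S \<inter> \<Union>W) \<subseteq> W" using WP cls_eq by blast
    show "finite W" by (rule finW)
  qed
  have c2: "card (T - S) \<le> card I"
  proof (rule card_inj_on_le)
    show "inj_on cls (T - S)" using IT_same T by (meson DiffD1 inj_onI)
    show "cls ` (T - S) \<subseteq> I"
    proof
      fix X assume "X \<in> cls ` (T - S)"
      then obtain t where t: "t \<in> T" "t \<notin> S" "X = cls t" by blast
      then have "X \<in> P" "t \<in> X" using cls_in T IT_sub by auto
      then show "X \<in> I" unfolding I_def Ic_def using t by blast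
    qed
    show "finite I" using IP finP finite_subset by blast
  qed
  have finS: "finite S" "finite T" using S T IT_fin by auto
  have TSW: "T - S \<subseteq> \<Union>W"
  proof
    fix t assume t: "t \<in> T - S"
    then have "cls t \<in> P" "t \<in> cls t" using cls_in T IT_sub by auto
    then have "cls t \<in> I" unfolding I_def Ic_def using t by blast
    then show "t \<in> \<Union>W" using IW \<open>t \<in> cls t\<close> by blast
  qed
  have "U \<inter> \<Union>W \<subseteq> (S \<inter> \<Union>W) \<union> (T - S)" unfolding U_def by blast
  then have c3: "card (U \<inter> \<Union>W) \<le> card W + card I"
    using c1 c2 finS card_mono[of "(S \<inter> \<Union>W) \<union> (T - S)"] card_Un_le[of "S \<inter> \<Union>W" "T - S"]
    by (meson add_mono finite_Diff finite_Int finite_UnI order_trans)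
  have finU: "finite U" unfolding U_def using finS by simp
  have finD: "finite D" unfolding D_def Dc_def using finU by simp
  have "card D \<le> card (U \<inter> \<Union>W) + card (set xs)"
    unfolding D_def Dc_def W_def[symmetric] by (rule card_Un_le)
  also have "\<dots> \<le> card (U \<inter> \<Union>W) + m" unfolding m_def using card_length by simp
  finally have cD: "card D \<le> 2 * card W" using c3 cW by linarith
  have "card N \<le> (\<Sum>d\<in>D. card {v\<in>VG. E d v})"
  proof -
    have "N = (\<Union>d\<in>D. {v\<in>VG. E d v})" unfolding N_def by blast
    then show ?thesis using card_UN_le[OF finD] by simp
  qed
  also have "\<dots> \<le> card D * Dl" using sum_bounded_above[of D "\<lambda>d. card {v\<in>VG. E d v}" Dl] deg_le by simp
  finally have cN: "card N \<le> 2 * card W * Dl" using cD by (meson le_trans mult_le_mono1)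
  have cUW: "card (\<Union>W) = (\<Sum>X\<in>W. card X)"
  proof (rule card_Union_disjoint)
    show "pairwise disjnt W" using partition_onD2[OF pt] WP unfolding disjoint_def pairwise_def disjnt_def by blast
    show "\<And>A. A \<in> W \<Longrightarrow> finite A" using WP finX by blast
  qed
  have "card W * (2 * Dl + 1) \<le> (\<Sum>X\<in>W. card X)"
    using sum_bounded_below[of W "2 * Dl + 1" card] sz WP by auto
  then have big: "card N < card (\<Union>W)" using cN cUW cW cI1 by (simp add: algebra_simps)
  have finN: "finite N" unfolding N_def using finV by simp
  have "\<not> \<Union>W \<subseteq> N" using big finN card_mono by (metis not_le)
  then obtain x where x: "x \<in> \<Union>W" "x \<notin> N" by blast
  have xV: "x \<in> VG" using x WP UP by blast
  have xD: "\<forall>d\<in>D. \<not> E x d" using x xV symE unfolding N_def by blast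
  have DW: "D = (U \<inter> \<Union>W) \<union> set xs" unfolding D_def Dc_def W_def ..
  have UWN: "U \<inter> \<Union>W \<subseteq> N"
  proof
    fix u assume u: "u \<in> U \<inter> \<Union>W"
    have uV: "u \<in> VG" using u UV by blast
    have cu: "cls u \<in> P" "u \<in> cls u" using cls_in uV by auto
    have cuW: "cls u \<in> W"
    proof -
      obtain Y where "Y \<in> W" "u \<in> Y" using u by blast
      then show ?thesis using cls_eq WP by blast
    qed
    show "u \<in> N"
    proof (cases "cls u \<in> I")
      case True
      obtain a where a: "S \<inter> cls u = {a}" using IT_one S cu by blast
      obtain b where b: "T \<inter> cls u = {b}" using IT_one T cu by blast
      have "a \<noteq> b" using True a b unfolding I_def Ic_def by auto
      have uST: "u \<in> S \<or> u \<in> T" using u unfolding U_def by blast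
      have nboth: "\<not> (u \<in> S \<and> u \<in> T)"
      proof
        assume "u \<in> S \<and> u \<in> T"
        then have "u \<in> S \<inter> cls u" "u \<in> T \<inter> cls u" using cu by auto
        then have "u = a" "u = b" using a b by auto
        then show False using \<open>a \<noteq> b\<close> by simp
      qed
      show ?thesis
      proof (cases "u \<in> S")
        case us: True
        then have "u \<notin> T" using nboth by simp
        then obtain t where t: "t \<in> T" "E u t" using noA2 us by blast
        have "t \<notin> S"
        proof
          assume "t \<in> S"
          then show False using IT_ind[OF S us] t(2) by simp
        qed
        then have "t \<in> \<Union>W" using TSW t(1) by blast
        then have "t \<in> D" unfolding DW U_def using t(1) by blast
        moreover have "E t u" using symE t(2) by simp
        ultimately show ?thesis unfolding N_def using uV by blast
      next
        case un: False
        then have ut: "u \<in> T" using uST by simp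
        then obtain t where t: "t \<in> S" "E u t" using noA1 un by blast
        have tT: "t \<notin> T"
        proof
          assume "t \<in> T"
          then show False using IT_ind[OF T ut] t(2) by simp
        qed
        have tV: "cls t \<in> P" "t \<in> cls t" using cls_in t(1) S IT_sub by auto
        have "S \<inter> cls t \<noteq> T \<inter> cls t" using t(1) tT tV by blast
        then have "cls t \<in> I" unfolding I_def Ic_def using tV by blast
        then have "t \<in> \<Union>W" using IW tV by blast
        then have "t \<in> D" unfolding DW U_def using t(1) by blast
        moreover have "E t u" using symE t(2) by simp
        ultimately show ?thesis unfolding N_def using uV by blast
      qed
    next
      case False
      then have "cls u \<in> (\<Union>y\<in>set xs. cls ` bl U y)"
        using cuW unfolding W_def Wc_def by blast
      then obtain y where y: "y \<in> set xs" "cls u \<in> cls ` bl U y" by blast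
      then obtain u' where u': "u' \<in> bl U y" "cls u' = cls u" by blast
      have u'U: "u' \<in> U" "E y u'" using u' unfolding bl_def by auto
      have "u' \<in> VG" using u'U UV by blast
      then have "u' \<in> cls u" using u'(2) cls_in by metis
      obtain a where a: "S \<inter> cls u = {a}" using IT_one S cu by blast
      have "S \<inter> cls u = T \<inter> cls u" using False cu unfolding I_def Ic_def by blast
      then have Ua: "U \<inter> cls u = {a}" using a unfolding U_def by blast
      have "u' \<in> U \<inter> cls u" "u \<in> U \<inter> cls u" using u'U \<open>u' \<in> cls u\<close> u cu by auto
      then have "u' = u" using Ua by auto
      moreover have "y \<in> D" unfolding DW using y by blast
      moreover have "E y u" using u'U \<open>u' = u\<close> by simp
      ultimately show ?thesis unfolding N_def using uV by blast
    qed
  qed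
  have xsN: "set xs \<subseteq> N"
  proof
    fix y assume y: "y \<in> set xs"
    then obtain q where q: "q < length xs" "y = xs!q" by (metis in_set_conv_nth)
    then obtain u where u: "u \<in> bl U y" using blk unfolding U_def by blast
    have uU: "u \<in> U" "E y u" using u unfolding bl_def by auto
    have "cls u \<in> W" unfolding W_def Wc_def using y u by blast
    then have "u \<in> U \<inter> \<Union>W" using uU UV cls_in by blast
    then have "u \<in> D" unfolding D_def Dc_def W_def by blast
    moreover have "y \<in> VG" using uU edgeV by blast
    ultimately show "y \<in> N" unfolding N_def using uU symE by blast
  qed
  have xU: "x \<notin> U" using x UWN by blast
  have xxs: "x \<notin> set xs" using x xsN by blast
  have val: "valid I U (xs @ [x])"
    unfolding valid_def
  proof (intro allI impI)
    fix p assume p: "p < length (xs @ [x])"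
    show "(xs @ [x]) ! p \<in> \<Union>(Wc I U (take p (xs @ [x]))) \<and> (xs @ [x]) ! p \<notin> U \<and>
          (xs @ [x]) ! p \<notin> set (take p (xs @ [x])) \<and> (\<forall>d\<in>Dc I U (take p (xs @ [x])). \<not> E ((xs @ [x]) ! p) d)"
    proof (cases "p < length xs")
      case True
      then have "(xs @ [x]) ! p = xs ! p" "take p (xs @ [x]) = take p xs" by (auto simp: nth_append)
      then show ?thesis using v True unfolding valid_def I_def U_def by simp
    next
      case False
      then have "p = length xs" using p by simp
      then have "(xs @ [x]) ! p = x" "take p (xs @ [x]) = xs" by auto
      then show ?thesis using x xU xxs xD unfolding W_def D_def by simp
    qed
  qed
  have lx: "(pot U (xs @ [x]), pot U xs) \<in> lex less_than"
  proof (rule lex_lt)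
    show "length (pot U (xs @ [x])) = length (pot U xs)" by (simp add: pot_len)
    show "m < length (pot U (xs @ [x]))" using mP by (simp add: pot_len)
    show "\<forall>q<m. pot U (xs @ [x]) ! q = pot U xs ! q"
      using mP unfolding pot_def m_def by (auto simp: nth_append)
    have "card (bl U x) \<le> Dl" using bl_le UV by blast
    then show "pot U (xs @ [x]) ! m < pot U xs ! m"
      using mP unfolding pot_def m_def by (simp add: nth_append)
  qed
  show ?thesis using val lx unfolding I_def U_def by blast
qed

end



context RGctx
begin

lemma pot_nth: "q < card P \<Longrightarrow> pot U xs ! q = (if q < length xs then card (bl U (xs!q)) else Suc Dl)"
  unfolding pot_def by simp

lemma chainB:
  assumes IP: "I \<subseteq> P" and UV: "U \<subseteq> VG" and v: "valid I U xs" and l: "l < length xs"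
    and fr: "bl U (xs!l) = {}" and prev: "\<forall>q<l. bl U (xs!q) \<noteq> {}"
    and ZI: "cls (xs!l) \<notin> I" and Uc: "U \<inter> cls (xs!l) = {c}"
  shows "\<exists>ys. valid I (insert (xs!l) (U - cls (xs!l))) ys
     \<and> (pot (insert (xs!l) (U - cls (xs!l))) ys, pot U xs) \<in> lex less_than"
proof -
  define x where "x = xs!l"
  define Z where "Z = cls x"
  define U' where "U' = insert x (U - Z)"
  have xW: "x \<in> \<Union>(Wc I U (take l xs))" using validD(1)[OF v l] unfolding x_def .
  have xU: "x \<notin> U" using validD(2)[OF v l] unfolding x_def .
  have xprev: "x \<notin> set (take l xs)" using validD(3)[OF v l] unfolding x_def .
  have xD: "\<And>d. d \<in> Dc I U (take l xs) \<Longrightarrow> \<not> E x d" using validD(4)[OF v l] unfolding x_def .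
  have WlP: "Wc I U (take l xs) \<subseteq> P" using Wc_sub IP UV by blast
  obtain Y where Y: "Y \<in> Wc I U (take l xs)" "x \<in> Y" using xW by blast
  have YP: "Y \<in> P" using Y WlP by blast
  have ZY: "Z = Y" unfolding Z_def using cls_eq YP Y(2) by blast
  have ZP: "Z \<in> P" "x \<in> Z" using ZY YP Y by auto
  have ZI': "Z \<notin> I" using ZI unfolding Z_def x_def .
  have Uc': "U \<inter> Z = {c}" using Uc unfolding Z_def x_def .
  have "Z \<in> (\<Union>y\<in>set (take l xs). cls ` bl U y)" using Y ZY ZI' unfolding Wc_def by blast
  then obtain y where y: "y \<in> set (take l xs)" "Z \<in> cls ` bl U y" by blast
  then obtain h where h: "h < length (take l xs)" "take l xs ! h = y" by (metis in_set_conv_nth)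
  have "h < l" "xs ! h = y" using h l by auto
  then have exh: "\<exists>h. h < l \<and> Z \<in> cls ` bl U (xs!h)" using y by blast
  obtain i where i: "i < l" "Z \<in> cls ` bl U (xs!i)" and imin: "\<And>h. h < i \<Longrightarrow> Z \<notin> cls ` bl U (xs!h)"
  proof -
    from exh obtain i where "i < l \<and> Z \<in> cls ` bl U (xs!i)" "\<forall>h<i. \<not> (h < l \<and> Z \<in> cls ` bl U (xs!h))"
      using exists_least_iff[of "\<lambda>h. h < l \<and> Z \<in> cls ` bl U (xs!h)"] by blast
    then show ?thesis using that by auto
  qed
  have setl: "\<And>h. h < l \<Longrightarrow> xs!h \<in> set (take l xs)"
    using l by (metis in_set_conv_nth length_take min.absorb4 min_less_iff_conj nth_take order.strict_trans)
  have Dset: "set (take l xs) \<subseteq> Dc I U (take l xs)" unfolding Dc_def by blast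
  have F1: "\<And>h. h \<le> i \<Longrightarrow> \<not> E (xs!h) x"
  proof -
    fix h assume "h \<le> i"
    then have "xs!h \<in> Dc I U (take l xs)" using setl Dset i(1) by (meson le_less_trans subsetD)
    then have "\<not> E x (xs!h)" using xD by blast
    then show "\<not> E (xs!h) x" using symE by blast
  qed
  have cZ: "c \<in> Z" "c \<in> U" using Uc' by auto
  have F2: "\<And>h. h < i \<Longrightarrow> \<not> E (xs!h) c"
  proof
    fix h assume h: "h < i" "E (xs!h) c"
    then have "c \<in> bl U (xs!h)" unfolding bl_def using cZ by simp
    moreover have "cls c = Z" using cls_eq ZP cZ by blast
    ultimately have "Z \<in> cls ` bl U (xs!h)" by blast
    then show False using imin h by blast
  qed
  have F3: "\<And>y. \<not> E y x \<Longrightarrow> bl U' y = bl U y - Z"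
    unfolding bl_def U'_def by auto
  have F4: "\<And>h. h < i \<Longrightarrow> bl U' (xs!h) = bl U (xs!h)"
  proof -
    fix h assume h: "h < i"
    have e: "bl U' (xs!h) = bl U (xs!h) - Z" using F3 F1 h by simp
    have "bl U (xs!h) \<inter> Z = {}"
    proof (rule ccontr)
      assume "bl U (xs!h) \<inter> Z \<noteq> {}"
      then obtain u where u: "u \<in> bl U (xs!h)" "u \<in> Z" by blast
      then have "u \<in> U \<inter> Z" unfolding bl_def by blast
      then have "u = c" using Uc' by blast
      then show False using u F2 h unfolding bl_def by blast
    qed
    then show "bl U' (xs!h) = bl U (xs!h)" using e by blast
  qed
  have settk: "\<And>p y. p \<le> i \<Longrightarrow> y \<in> set (take p xs) \<Longrightarrow> \<exists>h<p. y = xs!h"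
    by (metis in_set_conv_nth length_take min_less_iff_conj nth_take)
  have F5: "\<And>p. p \<le> i \<Longrightarrow> Wc I U' (take p xs) = Wc I U (take p xs)"
  proof -
    fix p assume p: "p \<le> i"
    have "\<And>y. y \<in> set (take p xs) \<Longrightarrow> cls ` bl U' y = cls ` bl U y"
    proof -
      fix y assume "y \<in> set (take p xs)"
      then obtain h where "h < p" "y = xs!h" using settk p by blast
      then show "cls ` bl U' y = cls ` bl U y" using F4 p by simp
    qed
    then show "Wc I U' (take p xs) = Wc I U (take p xs)" unfolding Wc_def by simp
  qed
  have F6: "\<And>p. p \<le> i \<Longrightarrow> Z \<notin> Wc I U (take p xs)"
  proof
    fix p assume p: "p \<le> i" and "Z \<in> Wc I U (take p xs)"
    then have "Z \<in> (\<Union>y\<in>set (take p xs). cls ` bl U y)" using ZI' unfolding Wc_def by blast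
    then obtain y where "y \<in> set (take p xs)" "Z \<in> cls ` bl U y" by blast
    then obtain h where "h < p" "y = xs!h" "Z \<in> cls ` bl U (xs!h)" using settk p by blast
    then show False using imin p by simp
  qed
  have F7: "\<And>p. p \<le> i \<Longrightarrow> Dc I U' (take p xs) = Dc I U (take p xs)"
  proof -
    fix p assume p: "p \<le> i"
    define W where "W = Wc I U (take p xs)"
    have WP: "W \<subseteq> P" unfolding W_def using Wc_sub IP UV by blast
    have ZW: "Z \<notin> W" unfolding W_def using F6 p by blast
    have disj: "\<And>w. w \<in> \<Union>W \<Longrightarrow> w \<notin> Z"
    proof
      fix w assume "w \<in> \<Union>W" "w \<in> Z"
      then obtain Y' where "Y' \<in> W" "w \<in> Y'" by blast
      then have "Y' = Z" using uniq WP ZP \<open>w \<in> Z\<close> by blast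
      then show False using ZW \<open>Y' \<in> W\<close> by simp
    qed
    have "U' \<inter> \<Union>W = U \<inter> \<Union>W"
    proof
      show "U' \<inter> \<Union>W \<subseteq> U \<inter> \<Union>W" unfolding U'_def using disj ZP by blast
      show "U \<inter> \<Union>W \<subseteq> U' \<inter> \<Union>W" unfolding U'_def using disj by blast
    qed
    then show "Dc I U' (take p xs) = Dc I U (take p xs)"
      unfolding Dc_def using F5[OF p] unfolding W_def by simp
  qed
  define ys where "ys = take (Suc i) xs"
  have lys: "length ys = Suc i" unfolding ys_def using i l by simp
  have val: "valid I U' ys"
    unfolding valid_def
  proof (intro allI impI)
    fix p assume p: "p < length ys"
    then have pi: "p \<le> i" using lys by simp
    have pl: "p < length xs" using pi i l by simp
    have e1: "ys ! p = xs ! p" "take p ys = take p xs" unfolding ys_def using pi by auto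
    have a1: "xs!p \<in> \<Union>(Wc I U' (take p xs))" using validD(1)[OF v pl] F5[OF pi] by simp
    have "xs!p \<in> set (take l xs)" using setl pi i(1) by simp
    then have "xs!p \<noteq> x" using xprev by blast
    then have a2: "xs!p \<notin> U'" unfolding U'_def using validD(2)[OF v pl] by blast
    have a3: "xs!p \<notin> set (take p xs)" using validD(3)[OF v pl] .
    have a4: "\<forall>d\<in>Dc I U' (take p xs). \<not> E (xs!p) d" using validD(4)[OF v pl] F7[OF pi] by simp
    show "ys ! p \<in> \<Union>(Wc I U' (take p ys)) \<and> ys ! p \<notin> U' \<and> ys ! p \<notin> set (take p ys) \<and>
          (\<forall>d\<in>Dc I U' (take p ys). \<not> E (ys ! p) d)"
      using a1 a2 a3 a4 e1 by simp
  qed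
  have cWl: "card I + l \<le> card (Wc I U (take l xs))" using Wcard[OF v IP UV, of l] l prev by simp
  have "card (Wc I U (take l xs)) \<le> card P" using WlP finP card_mono by blast
  then have iP: "i < card P" using cWl i(1) by linarith
  have lx: "(pot U' ys, pot U xs) \<in> lex less_than"
  proof (rule lex_lt)
    show "length (pot U' ys) = length (pot U xs)" by (simp add: pot_len)
    show "i < length (pot U' ys)" using iP by (simp add: pot_len)
    show "\<forall>q<i. pot U' ys ! q = pot U xs ! q"
    proof (intro allI impI)
      fix q assume q: "q < i"
      have "q < length ys" "q < length xs" "ys ! q = xs ! q" using q lys i l unfolding ys_def by auto
      then show "pot U' ys ! q = pot U xs ! q" using pot_nth q iP F4[OF q] by simp
    qed
    have B: "bl U' (xs!i) = bl U (xs!i) - Z" using F3 F1 by simp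
    obtain u where u: "u \<in> bl U (xs!i)" "cls u = Z" using i(2) by blast
    have "u \<in> VG" using u UV unfolding bl_def by blast
    then have "u \<in> Z" using u(2) cls_in by blast
    then have "bl U (xs!i) - Z \<subset> bl U (xs!i)" using u(1) by blast
    then have "card (bl U' (xs!i)) < card (bl U (xs!i))" using B bl_fin[OF UV] psubset_card_mono by metis
    moreover have "i < length ys" "i < length xs" "ys ! i = xs ! i" using lys i l unfolding ys_def by auto
    ultimately show "pot U' ys ! i < pot U xs ! i" using pot_nth iP by simp
  qed
  show ?thesis using val lx unfolding U'_def Z_def x_def by blast
qed

end



context RGctx
begin

lemma reduce_aux:
  "\<forall>S T xs. IT S \<longrightarrow> IT T \<longrightarrow> S \<noteq> T \<longrightarrow> valid (Ic S T) (S \<union> T) xs \<longrightarrow> pot (S \<union> T) xs = w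
     \<longrightarrow> (\<exists>S' T'. IT S' \<and> IT T' \<and> reach S S' \<and> reach T T' \<and> card (S' - T') < card (S - T))"
proof (induct w rule: wf_induct[OF wf_lex[OF wf_less_than]])
  fix w
  assume IH: "\<forall>y. (y, w) \<in> lex less_than \<longrightarrow> (\<forall>S T xs. IT S \<longrightarrow> IT T \<longrightarrow> S \<noteq> T \<longrightarrow> valid (Ic S T) (S \<union> T) xs \<longrightarrow> pot (S \<union> T) xs = y
     \<longrightarrow> (\<exists>S' T'. IT S' \<and> IT T' \<and> reach S S' \<and> reach T T' \<and> card (S' - T') < card (S - T)))"
  show "\<forall>S T xs. IT S \<longrightarrow> IT T \<longrightarrow> S \<noteq> T \<longrightarrow> valid (Ic S T) (S \<union> T) xs \<longrightarrow> pot (S \<union> T) xs = w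
     \<longrightarrow> (\<exists>S' T'. IT S' \<and> IT T' \<and> reach S S' \<and> reach T T' \<and> card (S' - T') < card (S - T))"
  proof (intro allI impI)
    fix S T xs
    assume S: "IT S" and T: "IT T" and ST: "S \<noteq> T" and v: "valid (Ic S T) (S \<union> T) xs"
      and pw: "pot (S \<union> T) xs = w"
    have UV: "S \<union> T \<subseteq> VG" using S T IT_sub by blast
    show "\<exists>S' T'. IT S' \<and> IT T' \<and> reach S S' \<and> reach T T' \<and> card (S' - T') < card (S - T)"
    proof (cases "\<exists>t\<in>T - S. \<forall>s\<in>S. \<not> E t s")
      case True
      then obtain t where "t \<in> T" "t \<notin> S" "\<forall>s\<in>S. \<not> E t s" by blast
      then obtain S' where "IT S'" "RG_adj VG E P S S'" "card (S' - T) < card (S - T)"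
        using moveA1[OF S T] by blast
      then show ?thesis using T by (meson r_into_rtranclp rtranclp.rtrancl_refl)
    next
      case noA1: False
      show ?thesis
      proof (cases "\<exists>s\<in>S - T. \<forall>t\<in>T. \<not> E s t")
        case True
        then obtain s where "s \<in> S" "s \<notin> T" "\<forall>t\<in>T. \<not> E s t" by blast
        then obtain T' where "IT T'" "RG_adj VG E P T T'" "card (S - T') < card (S - T)"
          using moveA2[OF S T] by blast
        then show ?thesis using S by (meson r_into_rtranclp rtranclp.rtrancl_refl)
      next
        case noA2: False
        show ?thesis
        proof (cases "\<exists>q<length xs. bl (S \<union> T) (xs!q) = {}")
          case True
          then obtain l where l: "l < length xs" "bl (S \<union> T) (xs!l) = {}"
            and prev: "\<forall>q<l. \<not> (q < length xs \<and> bl (S \<union> T) (xs!q) = {})"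
            using exists_least_iff[of "\<lambda>q. q < length xs \<and> bl (S \<union> T) (xs!q) = {}"] by blast
          have prev': "\<forall>q<l. bl (S \<union> T) (xs!q) \<noteq> {}" using prev l(1) by auto
          define x where "x = xs!l"
          have xU: "x \<notin> S \<union> T" using validD(2)[OF v l(1)] unfolding x_def .
          have xW: "x \<in> \<Union>(Wc (Ic S T) (S \<union> T) (take l xs))" using validD(1)[OF v l(1)] unfolding x_def .
          have "Wc (Ic S T) (S \<union> T) (take l xs) \<subseteq> P" using Wc_sub Ic_sub UV by blast
          then have xV: "x \<in> VG" using xW UP by blast
          have xfree: "\<forall>u\<in>S \<union> T. \<not> E x u" using l(2) unfolding x_def bl_def by blast
          show ?thesis
          proof (cases "cls x \<in> Ic S T")
            case True
            obtain S' T' where "IT S'" "IT T'" "RG_adj VG E P S S'" "RG_adj VG E P T T'"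
              "card (S' - T') < card (S - T)"
              using moveB1[OF S T xV xU xfree True] by blast
            then show ?thesis by (meson r_into_rtranclp)
          next
            case False
            have cx: "cls x \<in> P" "x \<in> cls x" using cls_in xV by auto
            obtain a where a: "S \<inter> cls x = {a}" using IT_one S cx by blast
            have "S \<inter> cls x = T \<inter> cls x" using False cx unfolding Ic_def by blast
            then have Ua: "(S \<union> T) \<inter> cls x = {a}" using a by blast
            obtain ys where ys: "valid (Ic S T) (insert x (S \<union> T - cls x)) ys"
              "(pot (insert x (S \<union> T - cls x)) ys, pot (S \<union> T) xs) \<in> lex less_than"
              using chainB[OF Ic_sub UV v l(1) l(2) prev' False[unfolded x_def] Ua[unfolded x_def]]
              unfolding x_def by blast
            define S' where "S' = insert x (S - cls x)"
            define T' where "T' = insert x (T - cls x)"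
            have mB: "IT S' \<and> IT T' \<and> RG_adj VG E P S S' \<and> RG_adj VG E P T T'
               \<and> S' - T' = S - T \<and> Ic S' T' = Ic S T \<and> S' \<union> T' = insert x (S \<union> T - cls x)"
              using moveB2[OF S T xV xU xfree False] unfolding S'_def T'_def .
            have S'T': "S' \<noteq> T'"
            proof
              assume "S' = T'"
              then have "Ic S' T' = {}" unfolding Ic_def by simp
              then show False using mB Ic_ne[OF S T ST] by simp
            qed
            have v': "valid (Ic S' T') (S' \<union> T') ys" using ys(1) mB by simp
            have lx': "(pot (S' \<union> T') ys, w) \<in> lex less_than" using ys(2) mB pw by simp
            obtain S'' T'' where r: "IT S''" "IT T''" "reach S' S''" "reach T' T''" "card (S'' - T'') < card (S' - T')"
              using IH lx' mB S'T' v' by blast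
            have "reach S S''" using mB r(3) by (meson converse_rtranclp_into_rtranclp)
            moreover have "reach T T''" using mB r(4) by (meson converse_rtranclp_into_rtranclp)
            moreover have "card (S'' - T'') < card (S - T)" using r(5) mB by simp
            ultimately show ?thesis using r(1,2) by blast
          qed
        next
          case False
          then have blk: "\<forall>q<length xs. bl (S \<union> T) (xs!q) \<noteq> {}" by blast
          have nA1: "\<forall>t\<in>T - S. \<exists>s\<in>S. E t s" using noA1 by blast
          have nA2: "\<forall>s\<in>S - T. \<exists>t\<in>T. E s t" using noA2 by blast
          obtain x where x: "valid (Ic S T) (S \<union> T) (xs @ [x])"
            "(pot (S \<union> T) (xs @ [x]), pot (S \<union> T) xs) \<in> lex less_than"
            using chainC[OF S T ST v blk nA1 nA2] by blast
          then show ?thesis using IH pw S T ST by blast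
        qed
      qed
    qed
  qed
qed

lemma reduce:
  assumes "IT S" "IT T" "S \<noteq> T"
  shows "\<exists>S' T'. IT S' \<and> IT T' \<and> reach S S' \<and> reach T T' \<and> card (S' - T') < card (S - T)"
proof -
  have "valid (Ic S T) (S \<union> T) []" unfolding valid_def by simp
  then show ?thesis using reduce_aux assms by blast
qed

lemma connected: "IT S \<Longrightarrow> IT T \<Longrightarrow> reach S T"
proof (induction "card (S - T)" arbitrary: S T rule: less_induct)
  case less
  show ?case
  proof (cases "S = T")
    case True then show ?thesis by simp
  next
    case False
    then obtain S' T' where r: "IT S'" "IT T'" "reach S S'" "reach T T'" "card (S' - T') < card (S - T)"
      using reduce less.prems by blast
    have "reach S' T'" using less.hyps r by blast
    moreover have "reach T' T" using rtranclp_sym[OF r(4)] adj_sym by blast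
    ultimately show ?thesis using r(3) by (meson rtranclp_trans)
  qed
qed

end

theorem corollary6p3:
  fixes VG :: "'a set" and E :: "'a \<Rightarrow> 'a \<Rightarrow> bool" and P :: "'a set set"
  assumes "simple_graph VG E"
    and "partition_on VG P"
    and "\<forall>X\<in>P. card X \<ge> 2 * max_degree VG E + 1"
  shows "RG_connected VG E P"
proof -
  interpret RGctx VG E P using assms by unfold_locales
  show ?thesis unfolding RG_connected_def using connected by blast
qed

end
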